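(* For any dynamic network game $\mathcal{G}$ considered as a safety game: if Destructor wins the safety game $\mathcal{G}$, then he also has a strict strategy that wins the safety game $\mathcal{G}$.
   Context: Dynamic network games $(G,R)$ are played on networks $G=(V,E,A,S,(P_a)_{a\in\Sigma})$ ($V$ nodes, $E$ undirected edges, $A\subseteq V$ active nodes, $S\subseteq A$ strong nodes, labels given by a partition $(P_a)$ of $V$; weak nodes are those in $A\setminus S$). Destructor and Constructor alternate (Destructor first, either may skip); Destructor deletes one weak node per move, Constructor applies one of her rules from $R$ (relabeling, movement, or creation rules). A network is connected if the subgraph induced by the active nodes is connected. In the safety game the initial network is connected and Constructor wins a play iff all networks in it are connected; she wins the game iff she has a strategy winning all plays consistent with it, otherwise Destructor wins. A Destructor strategy is strict if, whenever it is his turn and the current network contains a weak node, he deletes a node (never skips). *)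

theory Defs
  imports Main
begin

text \<open>Networks G = (V, E, A, S, (P_a)_a). The label partition (P_a) is given by a
labelling function; P_a = {v \<in> V. label v = a}. Undirected edges are 2-element sets.\<close>

record ('v, 'l) network =
  nodes  :: "'v set"
  edges  :: "'v set set"
  active :: "'v set"
  strong :: "'v set"
  label  :: "'v \<Rightarrow> 'l"

definition wf_network :: "('v, 'l) network \<Rightarrow> bool" where
  "wf_network G \<longleftrightarrow> finite (nodes G)
     \<and> (\<forall>e \<in> edges G. \<exists>u v. e = {u, v} \<and> u \<noteq> v \<and> u \<in> nodes G \<and> v \<in> nodes G)
     \<and> strong G \<subseteq> active G \<and> active G \<subseteq> nodes G"

definition weak :: "('v, 'l) network \<Rightarrow> 'v set" where
  "weak G = active G - strong G"

definition connected_net :: "('v, 'l) network \<Rightarrow> bool" where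
  "connected_net G \<longleftrightarrow>
     (\<forall>u \<in> active G. \<forall>v \<in> active G.
        (u, v) \<in> {(x, y). x \<in> active G \<and> y \<in> active G \<and> {x, y} \<in> edges G}\<^sup>*)"

definition delete_node :: "'v \<Rightarrow> ('v, 'l) network \<Rightarrow> ('v, 'l) network" where
  "delete_node v G = G\<lparr> nodes := nodes G - {v},
                        edges := {e \<in> edges G. v \<notin> e},
                        active := active G - {v},
                        strong := strong G - {v} \<rparr>"

text \<open>Constructor's rules: a rule set R together with the semantics of rule
application, app r G G' meaning that applying rule r to G can yield G'.\<close>

definition is_play ::
  "('r \<Rightarrow> ('v,'l) network \<Rightarrow> ('v,'l) network \<Rightarrow> bool) \<Rightarrow> 'r set \<Rightarrow>
   ('v,'l) network \<Rightarrow> (nat \<Rightarrow> ('v,'l) network) \<Rightarrow> bool" where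
  "is_play app R G0 p \<longleftrightarrow> p 0 = G0 \<and>
     (\<forall>i. (even i \<longrightarrow> (p (Suc i) = p i \<or> (\<exists>v \<in> weak (p i). p (Suc i) = delete_node v (p i))))
        \<and> (odd i \<longrightarrow> (p (Suc i) = p i \<or> (\<exists>r \<in> R. app r (p i) (p (Suc i))))))"

definition hist :: "(nat \<Rightarrow> ('v,'l) network) \<Rightarrow> nat \<Rightarrow> ('v,'l) network list" where
  "hist p i = map p [0..<Suc i]"

text \<open>Destructor strategies map histories (Destructor to move: odd length) to
None (skip) or Some v (delete v).\<close>
definition legal_D :: "(('v,'l) network list \<Rightarrow> 'v option) \<Rightarrow> bool" where
  "legal_D \<sigma> \<longleftrightarrow> (\<forall>h v. odd (length h) \<longrightarrow> \<sigma> h = Some v \<longrightarrow> v \<in> weak (last h))"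

definition strict_D :: "(('v,'l) network list \<Rightarrow> 'v option) \<Rightarrow> bool" where
  "strict_D \<sigma> \<longleftrightarrow> (\<forall>h. odd (length h) \<longrightarrow> weak (last h) \<noteq> {} \<longrightarrow> \<sigma> h \<noteq> None)"

definition consistent_D ::
  "(('v,'l) network list \<Rightarrow> 'v option) \<Rightarrow> (nat \<Rightarrow> ('v,'l) network) \<Rightarrow> bool" where
  "consistent_D \<sigma> p \<longleftrightarrow> (\<forall>i. even i \<longrightarrow>
      p (Suc i) = (case \<sigma> (hist p i) of None \<Rightarrow> p i | Some v \<Rightarrow> delete_node v (p i)))"

definition legal_C ::
  "('r \<Rightarrow> ('v,'l) network \<Rightarrow> ('v,'l) network \<Rightarrow> bool) \<Rightarrow> 'r set \<Rightarrow>
   (('v,'l) network list \<Rightarrow> ('v,'l) network) \<Rightarrow> bool" where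
  "legal_C app R \<tau> \<longleftrightarrow> (\<forall>h. h \<noteq> [] \<longrightarrow> even (length h) \<longrightarrow>
      \<tau> h = last h \<or> (\<exists>r \<in> R. app r (last h) (\<tau> h)))"

definition consistent_C ::
  "(('v,'l) network list \<Rightarrow> ('v,'l) network) \<Rightarrow> (nat \<Rightarrow> ('v,'l) network) \<Rightarrow> bool" where
  "consistent_C \<tau> p \<longleftrightarrow> (\<forall>i. odd i \<longrightarrow> p (Suc i) = \<tau> (hist p i))"

definition constructor_wins_safety ::
  "('r \<Rightarrow> ('v,'l) network \<Rightarrow> ('v,'l) network \<Rightarrow> bool) \<Rightarrow> 'r set \<Rightarrow>
   ('v,'l) network \<Rightarrow> bool" where
  "constructor_wins_safety app R G0 \<longleftrightarrow> (\<exists>\<tau>. legal_C app R \<tau> \<and>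
     (\<forall>p. is_play app R G0 p \<and> consistent_C \<tau> p \<longrightarrow> (\<forall>i. connected_net (p i))))"

definition destructor_wins_safety ::
  "('r \<Rightarrow> ('v,'l) network \<Rightarrow> ('v,'l) network \<Rightarrow> bool) \<Rightarrow> 'r set \<Rightarrow>
   ('v,'l) network \<Rightarrow> bool" where
  "destructor_wins_safety app R G0 \<longleftrightarrow> \<not> constructor_wins_safety app R G0"

definition D_strategy_wins_safety ::
  "('r \<Rightarrow> ('v,'l) network \<Rightarrow> ('v,'l) network \<Rightarrow> bool) \<Rightarrow> 'r set \<Rightarrow>
   ('v,'l) network \<Rightarrow> (('v,'l) network list \<Rightarrow> 'v option) \<Rightarrow> bool" where
  "D_strategy_wins_safety app R G0 \<sigma> \<longleftrightarrow> legal_D \<sigma> \<and>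
     (\<forall>p. is_play app R G0 p \<and> consistent_D \<sigma> p \<longrightarrow> (\<exists>i. \<not> connected_net (p i)))"

end

theory Submission
  imports Defs
begin

datatype 'a rk = Base | DStep "'a rk" | CStep "'a \<Rightarrow> 'a rk"

inductive wD and wC for app :: "'r \<Rightarrow> ('v,'l) network \<Rightarrow> ('v,'l) network \<Rightarrow> bool" and R :: "'r set" where
  wD0: "\<not> connected_net G \<Longrightarrow> wD app R Base G"
| wD1: "v \<in> weak G \<Longrightarrow> wC app R t (delete_node v G) \<Longrightarrow> wD app R (DStep t) G"
| wC0: "\<not> connected_net G \<Longrightarrow> wC app R Base G"
| wC1: "wD app R (f G) G \<Longrightarrow> (\<forall>r\<in>R. \<forall>G'. app r G G' \<longrightarrow> wD app R (f G') G') \<Longrightarrow> wC app R (CStep f) G"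

definition stp :: "nat \<Rightarrow> 'a \<Rightarrow> 'a rk \<Rightarrow> 'a rk" where
  "stp i G t = (if even i then (case t of DStep t' \<Rightarrow> t' | _ \<Rightarrow> t)
                else (case t of CStep f \<Rightarrow> f G | _ \<Rightarrow> t))"

primrec Tr :: "'a rk \<Rightarrow> (nat \<Rightarrow> 'a) \<Rightarrow> nat \<Rightarrow> 'a rk" where
  "Tr t0 p 0 = t0"
| "Tr t0 p (Suc i) = stp i (p (Suc i)) (Tr t0 p i)"

definition trk :: "'a rk \<Rightarrow> 'a list \<Rightarrow> 'a rk" where
  "trk t0 h = Tr t0 (\<lambda>j. h ! j) (length h - 1)"

lemma Tr_cong: "(\<forall>j\<le>i. q j = p j) \<Longrightarrow> Tr t0 q i = Tr t0 p i"
  by (induction i) auto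

lemma hist_nth: "j \<le> i \<Longrightarrow> hist p i ! j = p j"
  unfolding hist_def by (simp add: nth_append del: upt_Suc)

lemma hist_len: "length (hist p i) = Suc i"
  unfolding hist_def by simp

lemma hist_last: "last (hist p i) = p i"
  unfolding hist_def by simp

lemma trk_hist: "trk t0 (hist p i) = Tr t0 p i"
  unfolding trk_def hist_len using Tr_cong[of i "(!) (hist p i)" p t0] hist_nth by auto

definition dflt :: "('v,'l) network list \<Rightarrow> 'v option" where
  "dflt h = (if weak (last h) = {} then None else Some (SOME v. v \<in> weak (last h)))"

definition sigma where
  "sigma app R t0 h = (case trk t0 h of
     DStep t' \<Rightarrow> (if \<exists>v\<in>weak (last h). wC app R t' (delete_node v (last h))
                 then Some (SOME v. v \<in> weak (last h) \<and> wC app R t' (delete_node v (last h)))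
                 else dflt h)
   | _ \<Rightarrow> dflt h)"

lemma sigma_legal: "legal_D (sigma app R t0)"
  unfolding legal_D_def
proof (intro allI impI)
  fix h v assume "sigma app R t0 h = Some v"
  moreover have "v \<in> weak (last h)" if "dflt h = Some v"
    using that unfolding dflt_def by (auto split: if_splits intro: someI_ex)
  moreover have "(SOME v. v \<in> weak (last h) \<and> wC app R t' (delete_node v (last h))) \<in> weak (last h)"
    if "\<exists>v\<in>weak (last h). wC app R t' (delete_node v (last h))" for t'
  proof -
    from that have "\<exists>v. v \<in> weak (last h) \<and> wC app R t' (delete_node v (last h))" by blast
    from someI_ex[OF this] show ?thesis by blast
  qed
  ultimately show "v \<in> weak (last h)"
    unfolding sigma_def by (auto split: rk.splits if_splits)
qed

lemma sigma_strict: "strict_D (sigma app R t0)"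
  unfolding strict_D_def sigma_def dflt_def by (auto split: rk.splits)

lemma key:
  assumes play: "is_play app R G0 p" and cons: "consistent_D (sigma app R t0) p"
  shows "\<forall>i. ((even i \<and> wD app R t (p i)) \<or> (odd i \<and> wC app R t (p i))) \<and> Tr t0 p i = t
          \<longrightarrow> (\<exists>j. \<not> connected_net (p j))"
proof (induction t)
  case Base
  then show ?case by (auto elim: wD.cases wC.cases)
next
  case (DStep t')
  show ?case
  proof (intro allI impI)
    fix i assume a: "((even i \<and> wD app R (DStep t') (p i)) \<or> (odd i \<and> wC app R (DStep t') (p i))) \<and> Tr t0 p i = DStep t'"
    then have ev: "even i" and w: "wD app R (DStep t') (p i)" and T: "Tr t0 p i = DStep t'"
      by (auto elim: wC.cases)
    from w obtain v where "v \<in> weak (p i)" "wC app R t' (delete_node v (p i))"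
      by (auto elim: wD.cases)
    then have ex: "\<exists>v\<in>weak (p i). wC app R t' (delete_node v (p i))" by blast
    define v' where "v' = (SOME v. v \<in> weak (p i) \<and> wC app R t' (delete_node v (p i)))"
    have v': "v' \<in> weak (p i) \<and> wC app R t' (delete_node v' (p i))"
      unfolding v'_def by (rule someI_ex) (use ex in blast)
    have "sigma app R t0 (hist p i) = Some v'"
      unfolding sigma_def trk_hist hist_last T v'_def using ex by simp
    with cons ev have ps: "p (Suc i) = delete_node v' (p i)"
      unfolding consistent_D_def by auto
    have "Tr t0 p (Suc i) = t'" using T ev by (simp add: stp_def)
    with ps v' ev have "(odd (Suc i) \<and> wC app R t' (p (Suc i))) \<and> Tr t0 p (Suc i) = t'" by auto
    then show "\<exists>j. \<not> connected_net (p j)" using DStep.IH by blast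
  qed
next
  case (CStep f)
  show ?case
  proof (intro allI impI)
    fix i assume a: "((even i \<and> wD app R (CStep f) (p i)) \<or> (odd i \<and> wC app R (CStep f) (p i))) \<and> Tr t0 p i = CStep f"
    then have od: "odd i" and w: "wC app R (CStep f) (p i)" and T: "Tr t0 p i = CStep f"
      by (auto elim: wD.cases)
    from w have w1: "wD app R (f (p i)) (p i)" and w2: "\<forall>r\<in>R. \<forall>G'. app r (p i) G' \<longrightarrow> wD app R (f G') G'"
      by (auto elim: wC.cases)
    from play od have "p (Suc i) = p i \<or> (\<exists>r \<in> R. app r (p i) (p (Suc i)))"
      unfolding is_play_def by auto
    then have wn: "wD app R (f (p (Suc i))) (p (Suc i))" using w1 w2 by auto
    have "Tr t0 p (Suc i) = f (p (Suc i))" using T od by (simp add: stp_def)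
    with wn od have "(even (Suc i) \<and> wD app R (f (p (Suc i))) (p (Suc i))) \<and> Tr t0 p (Suc i) = f (p (Suc i))" by auto
    then show "\<exists>j. \<not> connected_net (p j)" using CStep.IH[OF rangeI, of "p (Suc i)"] by blast
  qed
qed

theorem mainTheorem2:
  fixes app :: "'r \<Rightarrow> ('v,'l) network \<Rightarrow> ('v,'l) network \<Rightarrow> bool"
    and R :: "'r set"
    and G0 :: "('v,'l) network"
  assumes "wf_network G0"
    and "connected_net G0"
    and "destructor_wins_safety app R G0"
  shows "\<exists>\<sigma>. strict_D \<sigma> \<and> D_strategy_wins_safety app R G0 \<sigma>"
proof -
  have "\<exists>t0. wD app R t0 G0"
  proof (rule ccontr)
    assume n0: "\<not> (\<exists>t0. wD app R t0 G0)"
    let ?W = "\<lambda>G. \<exists>t. wD app R t G"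
    define \<tau> where "\<tau> h = (if \<exists>G'. (\<exists>r\<in>R. app r (last h) G') \<and> \<not> ?W G'
        then (SOME G'. (\<exists>r\<in>R. app r (last h) G') \<and> \<not> ?W G') else last h)" for h
    have lt: "legal_C app R \<tau>"
      unfolding legal_C_def
    proof (intro allI impI)
      fix h :: "('v,'l) network list"
      show "\<tau> h = last h \<or> (\<exists>r\<in>R. app r (last h) (\<tau> h))"
      proof (cases "\<exists>G'. (\<exists>r\<in>R. app r (last h) G') \<and> \<not> ?W G'")
        case True
        from someI_ex[OF True] have "\<exists>r\<in>R. app r (last h) (SOME G'. (\<exists>r\<in>R. app r (last h) G') \<and> \<not> ?W G')" by blast
        then show ?thesis unfolding \<tau>_def using True by simp
      qed (use \<tau>_def in auto)
    qed
    have nWC: "\<not> (\<exists>t. wC app R t G)" if "\<not> ?W G" for G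
    proof
      assume "\<exists>t. wC app R t G"
      then obtain t where "wC app R t G" by blast
      then show False using that by (cases rule: wC.cases) (auto intro: wD0)
    qed
    have "\<forall>p. is_play app R G0 p \<and> consistent_C \<tau> p \<longrightarrow> (\<forall>i. connected_net (p i))"
    proof (intro allI impI)
      fix p assume pp: "is_play app R G0 p \<and> consistent_C \<tau> p"
      have inv: "(even i \<longrightarrow> \<not> ?W (p i)) \<and> (odd i \<longrightarrow> \<not> (\<exists>t. wC app R t (p i)))" for i
      proof (induction i)
        case 0
        then show ?case using pp n0 unfolding is_play_def by auto
      next
        case (Suc i)
        show ?case
        proof (cases "even i")
          case True
          with Suc have nw: "\<not> ?W (p i)" by auto
          from pp True have "p (Suc i) = p i \<or> (\<exists>v \<in> weak (p i). p (Suc i) = delete_node v (p i))"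
            unfolding is_play_def by auto
          then have "\<not> (\<exists>t. wC app R t (p (Suc i)))"
          proof
            assume "p (Suc i) = p i" then show ?thesis using nWC[OF nw] by simp
          next
            assume "\<exists>v \<in> weak (p i). p (Suc i) = delete_node v (p i)"
            then obtain v where "v \<in> weak (p i)" "p (Suc i) = delete_node v (p i)" by blast
            then show ?thesis using nw wD1[of v "p i" app R] by auto
          qed
          then show ?thesis using True by auto
        next
          case False
          with Suc have nc: "\<not> (\<exists>t. wC app R t (p i))" by auto
          from pp False have ps: "p (Suc i) = \<tau> (hist p i)" unfolding consistent_C_def by auto
          have "\<not> ?W (p (Suc i))"
          proof (cases "\<exists>G'. (\<exists>r\<in>R. app r (p i) G') \<and> \<not> ?W G'")
            case True
            then show ?thesis using someI_ex[OF True] ps unfolding \<tau>_def hist_last by auto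
          next
            case F: False
            then have ps': "p (Suc i) = p i" using ps unfolding \<tau>_def hist_last by auto
            show ?thesis
            proof
              assume "?W (p (Suc i))"
              then have w0: "?W (p i)" using ps' by simp
              let ?f = "\<lambda>G. SOME t. wD app R t G"
              have "wC app R (CStep ?f) (p i)"
              proof (rule wC1)
                show "wD app R (?f (p i)) (p i)" using w0 by (rule someI_ex)
                show "\<forall>r\<in>R. \<forall>G'. app r (p i) G' \<longrightarrow> wD app R (?f G') G'"
                  using F by (metis someI_ex)
              qed
              then show False using nc by blast
            qed
          qed
          then show ?thesis using False by auto
        qed
      qed
      fix i show "connected_net (p i)"
          using inv[of i] by (cases "even i") (auto intro: wD0 wC0)
    qed
    with lt assms(3) show False
      unfolding destructor_wins_safety_def constructor_wins_safety_def by blast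
  qed
  then obtain t0 where t0: "wD app R t0 G0" by blast
  have "D_strategy_wins_safety app R G0 (sigma app R t0)"
    unfolding D_strategy_wins_safety_def
  proof (intro conjI)
    show "legal_D (sigma app R t0)" by (rule sigma_legal)
    show "\<forall>p. is_play app R G0 p \<and> consistent_D (sigma app R t0) p \<longrightarrow> (\<exists>i. \<not> connected_net (p i))"
    proof (intro allI impI)
    fix p assume pp: "is_play app R G0 p \<and> consistent_D (sigma app R t0) p"
    have "p 0 = G0" using pp unfolding is_play_def by auto
    then show "\<exists>i. \<not> connected_net (p i)"
      using key[OF conjunct1[OF pp] conjunct2[OF pp], of t0, rule_format, of 0] t0 by simp
  qed
  qed
  then show ?thesis using sigma_strict by blast
qed

end
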